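(* Let $x \in \Gamma$ be a BPSP instance. Then the optimal cost and the set of optimal ICC solutions of the BPSP are, respectively, \begin{align*} \textsc{BPSP}(x) &= \frac{1}{2}\Big\{|x|-1-\max_{z\in\{-1,1\}^{|x|/2}} \sum_{i=1}^{|x|-1}(-1)^{\eta(x,i)} z_{x_i} z_{x_{i+1}}\Big\} \\ &= \frac{1}{2}\Big\{|x|-1+\#_{\mathrm{dl}}(x)-\max_{z\in\{-1,1\}^{|x|/2}} \sum_{\substack{i=1\\ x_i\neq x_{i+1}}}^{|x|-1}(-1)^{\eta(x,i)} z_{x_i} z_{x_{i+1}}\Big\},\\ \widetilde{\textsc{BPSP}^*}(x) &= \operatorname{argmax}_{z\in\{-1,1\}^{|x|/2}} \sum_{i=1}^{|x|-1}(-1)^{\eta(x,i)} z_{x_i} z_{x_{i+1}} = \operatorname{argmax}_{z\in\{-1,1\}^{|x|/2}} \sum_{\substack{i=1\\ x_i\neq x_{i+1}}}^{|x|-1}(-1)^{\eta(x,i)} z_{x_i} z_{x_{i+1}}. \end{align*}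
   Context: $\Gamma_n$ is the set of words $x=(x_1,\ldots,x_{2n})\in[n]^{2n}$ in which every symbol of $[n]=\{1,\ldots,n\}$ occurs exactly twice, and $\Gamma=\bigcup_{n\ge1}\Gamma_n$; $|x|=2n$. A valid colouring of $x$ is $f\in\{r,b\}^{2n}$ with $f_i\neq f_j$ whenever $x_i=x_j$, $i\neq j$; its cost is $\xi(f)=\sum_{i=1}^{2n-1}[f_i\neq f_{i+1}]$, and $\textsc{BPSP}(x)$ is the minimum of $\xi(f)$ over valid colourings. In the ICC encoding, $z\in\{r,b\}^n$ gives the colour of the first occurrence of each symbol (the second occurrence gets the opposite colour), and $\widetilde{\textsc{BPSP}^*}(x)$ is the set of ICC strings $z$ minimising the resulting swap count. In the Ising formulation $r\equiv 1$, $b\equiv -1$. The eta function is $\eta(x,i)=[x_{i+1}\in\{x_1,\ldots,x_i\}]\oplus[x_i\in\{x_1,\ldots,x_{i-1}\}]$ for $i\in[2n-1]$, with $[\cdot]$ the Iverson bracket and $\oplus$ exclusive or. The double letter count is $\#_{\mathrm{dl}}(x)=|\{i\in[2n-1]: x_i=x_{i+1}\}|$. *)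

theory Defs
  imports Complex_Main "HOL-Library.FuncSet"
begin

text \<open>Words are lists; positions are 1-indexed via xat (xat x i = x_i).\<close>

definition xat :: "'a list \<Rightarrow> nat \<Rightarrow> 'a" where
  "xat x i = x ! (i - 1)"

definition Gamma_n :: "nat \<Rightarrow> nat list set" where
  "Gamma_n n = {x. length x = 2 * n \<and> set x \<subseteq> {1..n} \<and>
                   (\<forall>a\<in>{1..n}. count_list x a = 2)}"

definition Gamma :: "nat list set" where
  "Gamma = (\<Union>n\<in>{1..}. Gamma_n n)"

datatype colour = R | B

definition valid_colouring :: "nat list \<Rightarrow> colour list \<Rightarrow> bool" where
  "valid_colouring x f \<longleftrightarrow> length f = length x \<and>
     (\<forall>i\<in>{1..length x}. \<forall>j\<in>{1..length x}. i \<noteq> j \<longrightarrow> xat x i = xat x j \<longrightarrow> xat f i \<noteq> xat f j)"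

definition cost :: "colour list \<Rightarrow> nat" where
  "cost f = card {i\<in>{1..length f - 1}. xat f i \<noteq> xat f (i + 1)}"

definition BPSP :: "nat list \<Rightarrow> nat" where
  "BPSP x = Min (cost ` {f. valid_colouring x f})"

text \<open>ICC encoding: z gives the colour of the first occurrence of each symbol in [n].\<close>

definition opp :: "colour \<Rightarrow> colour" where
  "opp c = (if c = R then B else R)"

definition icc_colouring :: "nat list \<Rightarrow> (nat \<Rightarrow> colour) \<Rightarrow> colour list" where
  "icc_colouring x z = map (\<lambda>i. if xat x i \<in> set (take (i - 1) x)
                                  then opp (z (xat x i)) else z (xat x i)) [1..<length x + 1]"

definition ICC_space :: "nat list \<Rightarrow> (nat \<Rightarrow> colour) set" where
  "ICC_space x = {1..length x div 2} \<rightarrow>\<^sub>E (UNIV :: colour set)"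

definition BPSP_star_ICC :: "nat list \<Rightarrow> (nat \<Rightarrow> colour) set" where
  "BPSP_star_ICC x = {z \<in> ICC_space x.
      \<forall>z' \<in> ICC_space x. cost (icc_colouring x z) \<le> cost (icc_colouring x z')}"

definition spin :: "colour \<Rightarrow> int" where
  "spin c = (if c = R then 1 else -1)"

definition Spin_space :: "nat list \<Rightarrow> (nat \<Rightarrow> int) set" where
  "Spin_space x = {1..length x div 2} \<rightarrow>\<^sub>E {-1, 1}"

definition eta :: "nat list \<Rightarrow> nat \<Rightarrow> bool" where
  "eta x i = ((xat x (i + 1) \<in> set (take i x)) \<noteq> (xat x i \<in> set (take (i - 1) x)))"

definition dl_count :: "nat list \<Rightarrow> nat" where
  "dl_count x = card {i\<in>{1..length x - 1}. xat x i = xat x (i + 1)}"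

definition H :: "nat list \<Rightarrow> (nat \<Rightarrow> int) \<Rightarrow> int" where
  "H x z = (\<Sum>i = 1..length x - 1.
      (-1) ^ (if eta x i then 1 else 0) * z (xat x i) * z (xat x (i + 1)))"

definition H' :: "nat list \<Rightarrow> (nat \<Rightarrow> int) \<Rightarrow> int" where
  "H' x z = (\<Sum>i \<in> {i\<in>{1..length x - 1}. xat x i \<noteq> xat x (i + 1)}.
      (-1) ^ (if eta x i then 1 else 0) * z (xat x i) * z (xat x (i + 1)))"

definition argmax_on :: "('a \<Rightarrow> int) \<Rightarrow> 'a set \<Rightarrow> 'a set" where
  "argmax_on f S = {z \<in> S. \<forall>z' \<in> S. f z' \<le> f z}"

end

theory Submission
  imports Defs
begin

lemma mem_take: "a \<in> set (take k xs) \<longleftrightarrow> (\<exists>j. j < k \<and> j < length xs \<and> xs!j = a)"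
  by (auto simp: in_set_conv_nth)

lemma three:
  assumes "count_list xs a = 2" "j<k" "k<l" "l<length xs" "xs!j=a" "xs!k=a" "xs!l=a"
  shows False
proof -
  have "count_list xs a = card {m. m<length xs \<and> a = xs!m}"
    unfolding count_list_eq_length_filter length_filter_conv_card by (rule refl)
  also have "{m. m<length xs \<and> a = xs!m} = {m. m<length xs \<and> xs!m = a}" by blast
  finally have c: "card {m. m<length xs \<and> xs!m = a} = 2" using assms(1) by simp
  have "{j,k,l} \<subseteq> {m. m<length xs \<and> xs!m = a}" using assms by auto
  moreover have fin: "finite {m. m<length xs \<and> xs!m = a}" by simp
  ultimately have "card {j,k,l} \<le> card {m. m<length xs \<and> xs!m = a}" by (intro card_mono)
  then have "card {j,k,l} \<le> 2" using c by simp
  moreover have "card {j,k,l} = 3" using assms by auto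
  ultimately show False by simp
qed

lemma icc_len[simp]: "length (icc_colouring x z) = length x"
  by (simp add: icc_colouring_def del: upt_Suc)

lemma icc_nth: "k < length x \<Longrightarrow> icc_colouring x z ! k =
   (if x!k \<in> set (take k x) then opp (z (x!k)) else z (x!k))"
  by (simp add: icc_colouring_def xat_def del: upt_Suc)

lemma card_sum: "finite A \<Longrightarrow> int (card {i\<in>A. P i}) = (\<Sum>i\<in>A. if P i then 1 else 0)"
  by (simp add: sum.inter_filter[symmetric])

lemma cost_H:
  assumes "set x \<subseteq> {1..n}" "length x \<ge> 1"
  shows "2 * int (cost (icc_colouring x z)) = int (length x) - 1 - H x (\<lambda>a\<in>{1..n}. spin (z a))"
proof -
  let ?f = "icc_colouring x z"
  let ?w = "\<lambda>a\<in>{1..n}. spin (z a)"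
  let ?L = "length x"
  have tm: "2 * (if xat ?f i \<noteq> xat ?f (i+1) then 1 else 0) =
     1 - (-1) ^ (if eta x i then 1 else 0) * ?w (xat x i) * ?w (xat x (i + 1))"
    if i: "i \<in> {1..?L-1}" for i
  proof -
    have "x!(i-1) \<in> set x" "x!i \<in> set x" using i by auto
    then have in1: "xat x i \<in> {1..n}" "xat x (i+1) \<in> {1..n}" using assms(1)
      by (auto simp: xat_def)
    have e1: "xat ?f i = (if xat x i \<in> set (take (i-1) x) then opp (z (xat x i)) else z (xat x i))"
      unfolding xat_def using i by (intro icc_nth) auto
    have e2: "xat ?f (i+1) = (if xat x (i+1) \<in> set (take i x) then opp (z (xat x (i+1))) else z (xat x (i+1)))"
      unfolding xat_def using i icc_nth[of i x z] by auto
    have w1: "?w (xat x i) = spin (z (xat x i))" "?w (xat x (i+1)) = spin (z (xat x (i+1)))"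
      using in1 by auto
    show ?thesis unfolding e1 e2 eta_def w1
      by (cases "xat x i \<in> set (take (i-1) x)"; cases "xat x (i+1) \<in> set (take i x)";
          cases "z (xat x i)"; cases "z (xat x (i+1))"; simp only: opp_def spin_def; simp)
  qed
  have "int (cost ?f) = (\<Sum>i\<in>{1..?L-1}. (if xat ?f i \<noteq> xat ?f (i+1) then 1 else 0))"
    unfolding cost_def icc_len by (rule card_sum) simp
  then have "2 * int (cost ?f) = (\<Sum>i\<in>{1..?L-1}. 2 * (if xat ?f i \<noteq> xat ?f (i+1) then 1 else 0))"
    by (simp add: sum_distrib_left)
  also have "\<dots> = (\<Sum>i\<in>{1..?L-1}. 1 - (-1) ^ (if eta x i then 1 else 0) * ?w (xat x i) * ?w (xat x (i + 1)))"
    using tm by (rule sum.cong[OF refl])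
  also have "\<dots> = int ?L - 1 - H x ?w"
    using assms(2) by (simp add: H_def sum_subtractf of_nat_diff)
  finally show ?thesis .
qed


lemma cnt:
  assumes "set x \<subseteq> {1..m}" "\<forall>a\<in>{1..m}. count_list x a = 2"
    "j<k" "k<l" "l<length x" "x!j = x!k" "x!k = x!l"
  shows False
proof -
  have "j < length x" using assms(3,4,5) by simp
  then have "x!j \<in> set x" by simp
  then have "x!j \<in> {1..m}" using assms(1) by blast
  then have "count_list x (x!j) = 2" using assms(2) by blast
  moreover have e1: "x!k = x!j" using assms(6) by (rule sym)
  moreover have e2: "x!l = x!j" using assms(6,7) by simp
  ultimately show False by (intro three[OF _ assms(3,4,5) refl])
qed

lemma opp_neq[simp]: "opp c \<noteq> c" "c \<noteq> opp c"
  by (cases c; simp add: opp_def)+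

lemma icc_valid:
  assumes "set x \<subseteq> {1..m}" "\<forall>a\<in>{1..m}. count_list x a = 2"
  shows "valid_colouring x (icc_colouring x z)"
proof -
  have key: "icc_colouring x z ! i \<noteq> icc_colouring x z ! j"
    if ij: "i<j" "j<length x" "x!i = x!j" for i j
  proof -
    have "x!j \<in> set (take j x)" using ij by (auto simp: mem_take)
    then have 1: "icc_colouring x z ! j = opp (z (x!j))" using ij by (simp add: icc_nth)
    have "x!i \<notin> set (take i x)"
    proof
      assume "x!i \<in> set (take i x)"
      then obtain k where "k<i" "x!k = x!i" by (auto simp: mem_take)
      then show False using cnt[OF assms, of k i j] ij by auto
    qed
    then have 2: "icc_colouring x z ! i = z (x!j)" using ij by (simp add: icc_nth)
    show ?thesis using 1 2 by simp
  qed
  show ?thesis unfolding valid_colouring_def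
  proof (intro conjI ballI impI)
    fix i j assume i: "i \<in> {1..length x}" and j: "j \<in> {1..length x}" and "i \<noteq> j"
      and e: "xat x i = xat x j"
    then have d: "i - 1 < j - 1 \<or> j - 1 < i - 1" by auto
    have il: "i-1<length x" "j-1<length x" using i j by auto
    have ex: "x!(i-1) = x!(j-1)" using e by (simp add: xat_def)
    show "xat (icc_colouring x z) i \<noteq> xat (icc_colouring x z) j"
      unfolding xat_def using key[OF _ il(2) ex] key[OF _ il(1) ex[symmetric]] d by auto
  qed simp
qed

lemma valid_icc:
  assumes "set x \<subseteq> {1..length x div 2}" "valid_colouring x f"
  shows "\<exists>z\<in>ICC_space x. f = icc_colouring x z"
proof -
  let ?n = "length x div 2"
  let ?L = "length x"
  define z where "z = (\<lambda>a\<in>{1..?n}. f!(LEAST k. k<?L \<and> x!k = a))"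
  have zI: "z \<in> ICC_space x" by (simp add: z_def ICC_space_def)
  have lf: "length f = ?L" using assms(2) by (simp add: valid_colouring_def)
  have V: "f!p \<noteq> f!k" if "p<?L" "k<?L" "p\<noteq>k" "x!p = x!k" for p k
  proof -
    have "\<forall>i\<in>{1..length x}. \<forall>j\<in>{1..length x}. i \<noteq> j \<longrightarrow> xat x i = xat x j \<longrightarrow> xat f i \<noteq> xat f j"
      using assms(2) by (simp add: valid_colouring_def)
    moreover have "p+1 \<in> {1..length x}" "k+1 \<in> {1..length x}" "p+1 \<noteq> k+1" "xat x (p+1) = xat x (k+1)"
      using that by (auto simp: xat_def)
    ultimately have "xat f (p+1) \<noteq> xat f (k+1)" by blast
    then show ?thesis by (simp add: xat_def)
  qed
  have "f = icc_colouring x z"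
  proof (rule nth_equalityI)
    show "length f = length (icc_colouring x z)" using lf by simp
    fix k assume "k < length f"
    then have k: "k < ?L" using lf by simp
    define a where "a = x!k"
    have "x!k \<in> set x" using k by simp
    then have aI: "a \<in> {1..?n}" using assms(1) a_def by blast
    define p where "p = (LEAST q. q<?L \<and> x!q = a)"
    have p: "p<?L \<and> x!p = a" unfolding p_def by (rule LeastI[of _ k]) (use k a_def in auto)
    have pk: "p \<le> k" unfolding p_def by (rule Least_le) (use k a_def in auto)
    have za: "z a = f!p" using aI by (simp add: z_def p_def)
    show "f ! k = icc_colouring x z ! k"
    proof (cases "x!k \<in> set (take k x)")
      case True
      then obtain j where j: "j<k" "x!j = a" by (auto simp: mem_take a_def)
      have "p \<le> j" unfolding p_def by (rule Least_le) (use j k in auto)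
      then have "f!p \<noteq> f!k" using V[of p k] p j k a_def by auto
      then have "f!k = opp (f!p)" by (cases "f!k"; cases "f!p"; simp add: opp_def)
      then show ?thesis using True k za by (simp add: icc_nth a_def)
    next
      case False
      have "p = k"
      proof (rule ccontr)
        assume "p \<noteq> k" then have "p<k" using pk by simp
        then have "x!k \<in> set (take k x)" using p k a_def by (auto simp: mem_take)
        then show False using False by simp
      qed
      then show ?thesis using False k za by (simp add: icc_nth a_def)
    qed
  qed
  then show ?thesis using zI by blast
qed

lemma H_H':
  assumes "set x \<subseteq> {1..m}" "\<forall>a\<in>{1..m}. count_list x a = 2" "w \<in> {1..m} \<rightarrow>\<^sub>E {-1,1}"
  shows "H x w = H' x w - int (dl_count x)"
proof -
  let ?A = "{1..length x - 1}"
  let ?P = "\<lambda>i. xat x i \<noteq> xat x (i + 1)"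
  let ?t = "\<lambda>i. (-1::int) ^ (if eta x i then 1 else 0) * w (xat x i) * w (xat x (i + 1))"
  have split: "?A = {i\<in>?A. ?P i} \<union> {i\<in>?A. \<not> ?P i}" by auto
  have "H x w = sum ?t {i\<in>?A. ?P i} + sum ?t {i\<in>?A. \<not> ?P i}"
    unfolding H_def by (subst split) (rule sum.union_disjoint, auto)
  also have "sum ?t {i\<in>?A. \<not> ?P i} = sum (\<lambda>i. -1) {i\<in>?A. \<not> ?P i}"
  proof (rule sum.cong[OF refl])
    fix i assume i: "i \<in> {i\<in>?A. \<not> ?P i}"
    then have e: "x!(i-1) = x!i" and il: "1 \<le> i" "i < length x" by (auto simp: xat_def)
    have "x!i \<in> set (take i x)" using e il by (auto simp: mem_take intro!: exI[of _ "i-1"])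
    moreover have "x!(i-1) \<notin> set (take (i-1) x)"
    proof
      assume "x!(i-1) \<in> set (take (i-1) x)"
      then obtain j where "j<i-1" "x!j = x!(i-1)" by (auto simp: mem_take)
      then show False using cnt[OF assms(1,2), of j "i-1" i] e il by auto
    qed
    ultimately have et: "eta x i" by (simp add: eta_def xat_def)
    have "x!i \<in> set x" using il by simp
    then have "x!i \<in> {1..m}" using assms(1) by blast
    then have "w (x!i) \<in> {-1,1}" using assms(3) by auto
    then have "w (x!i) * w (x!i) = 1" by auto
    then show "?t i = -1" using et e by (simp add: xat_def)
  qed
  also have "sum (\<lambda>i. -1) {i\<in>?A. \<not> ?P i} = - int (dl_count x)"
    by (simp add: dl_count_def)
  finally show ?thesis unfolding H'_def by simp
qed


theorem corollary5:
  assumes "x \<in> Gamma"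
  shows "real (BPSP x) = (1/2) * (real (length x) - 1 - real_of_int (Max (H x ` Spin_space x)))
    \<and> real (BPSP x) = (1/2) * (real (length x) - 1 + real (dl_count x)
                                   - real_of_int (Max (H' x ` Spin_space x)))
    \<and> (\<lambda>z. \<lambda>a\<in>{1..length x div 2}. spin (z a)) ` BPSP_star_ICC x = argmax_on (H x) (Spin_space x)
    \<and> argmax_on (H x) (Spin_space x) = argmax_on (H' x) (Spin_space x)"
proof -
  obtain m where m: "m \<ge> 1" "length x = 2*m" "set x \<subseteq> {1..m}" "\<forall>a\<in>{1..m}. count_list x a = 2"
    using assms unfolding Gamma_def Gamma_n_def by auto
  define n where "n = length x div 2"
  have nm: "n = m" using m by (simp add: n_def)
  have setx: "set x \<subseteq> {1..n}" and cnt2: "\<forall>a\<in>{1..n}. count_list x a = 2"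
    using m nm by auto
  have L1: "length x \<ge> 1" using m by simp
  let ?I = "ICC_space x" and ?S = "Spin_space x"
  define \<phi> where "\<phi> = (\<lambda>z. \<lambda>a\<in>{1..n}. spin (z a))"
  have cH: "2 * int (cost (icc_colouring x z)) = int (length x) - 1 - H x (\<phi> z)" for z
    unfolding \<phi>_def by (rule cost_H[OF setx L1])
  have HH': "H x w = H' x w - int (dl_count x)" if "w \<in> ?S" for w
    using H_H'[OF setx cnt2, of w] that by (simp add: Spin_space_def n_def)
  have I_def': "?I = {1..n} \<rightarrow>\<^sub>E (UNIV :: colour set)" by (simp add: ICC_space_def n_def)
  have S_def': "?S = {1..n} \<rightarrow>\<^sub>E {-1, 1}" by (simp add: Spin_space_def n_def)
  have phiI: "\<phi> z \<in> ?S" for z unfolding S_def' \<phi>_def by (auto simp: spin_def)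
  have phiS: "\<exists>z\<in>?I. w = \<phi> z" if w: "w \<in> ?S" for w
  proof -
    define z where "z = (\<lambda>a\<in>{1..n}. if w a = 1 then R else B)"
    have "z \<in> ?I" unfolding I_def' z_def by simp
    moreover have "w = \<phi> z"
    proof
      fix a show "w a = \<phi> z a"
      proof (cases "a \<in> {1..n}")
        case True then have "w a \<in> {-1,1}" using w S_def' by auto
        then show ?thesis using True by (auto simp: \<phi>_def z_def spin_def)
      next
        case False then show ?thesis using w S_def' by (auto simp: \<phi>_def PiE_def extensional_def)
      qed
    qed
    ultimately show ?thesis by blast
  qed
  have valid: "{f. valid_colouring x f} = icc_colouring x ` ?I"
  proof
    show "{f. valid_colouring x f} \<subseteq> icc_colouring x ` ?I"
      using valid_icc[of x] setx unfolding n_def by blast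
    show "icc_colouring x ` ?I \<subseteq> {f. valid_colouring x f}"
      using icc_valid[OF setx cnt2] by blast
  qed
  have "(UNIV::colour set) = {R,B}" using colour.exhaust by auto
  then have "finite (UNIV::colour set)" by (metis finite.emptyI finite.insertI)
  then have finI: "finite ?I" unfolding I_def' by (intro finite_PiE) auto
  have finS: "finite ?S" unfolding S_def' by (rule finite_PiE) auto
  have neI: "(\<lambda>a\<in>{1..n}. R) \<in> ?I" unfolding I_def' by simp
  have B: "BPSP x = Min ((\<lambda>z. cost (icc_colouring x z)) ` ?I)"
    unfolding BPSP_def valid image_image ..
  obtain z0 where z0: "z0 \<in> ?I" "cost (icc_colouring x z0) = BPSP x"
  proof -
    have "BPSP x \<in> (\<lambda>z. cost (icc_colouring x z)) ` ?I" unfolding B using finI neI by (intro Min_in) auto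
    then show ?thesis using that by force
  qed
  have Bmin: "BPSP x \<le> cost (icc_colouring x z)" if "z \<in> ?I" for z
    unfolding B using finI that by (auto intro: Min_le)
  have MH: "Max (H x ` ?S) = int (length x) - 1 - 2 * int (BPSP x)"
  proof (rule Max_eqI)
    show "finite (H x ` ?S)" using finS by simp
    show "y \<le> int (length x) - 1 - 2 * int (BPSP x)" if yy: "y \<in> H x ` ?S" for y
    proof -
      obtain w where w: "w \<in> ?S" "y = H x w" using yy by auto
      obtain z where z: "z \<in> ?I" "w = \<phi> z" using phiS[OF w(1)] by auto
      show ?thesis using cH[of z] Bmin[OF z(1)] w z by simp
    qed
    show "int (length x) - 1 - 2 * int (BPSP x) \<in> H x ` ?S"
      using cH[of z0] z0 phiI[of z0] by (auto intro!: image_eqI[of _ _ "\<phi> z0"])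
  qed
  have MH': "Max (H' x ` ?S) = int (length x) - 1 - 2 * int (BPSP x) + int (dl_count x)"
  proof (rule Max_eqI)
    show "finite (H' x ` ?S)" using finS by simp
    show "y \<le> int (length x) - 1 - 2 * int (BPSP x) + int (dl_count x)" if yy: "y \<in> H' x ` ?S" for y
    proof -
      obtain w where w: "w \<in> ?S" "y = H' x w" using yy by auto
      obtain z where z: "z \<in> ?I" "w = \<phi> z" using phiS[OF w(1)] by auto
      show ?thesis using cH[of z] Bmin[OF z(1)] w z HH'[OF w(1)] by simp
    qed
    show "int (length x) - 1 - 2 * int (BPSP x) + int (dl_count x) \<in> H' x ` ?S"
      using cH[of z0] z0 phiI[of z0] HH'[OF phiI[of z0]] by (auto intro!: image_eqI[of _ _ "\<phi> z0"])
  qed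
  have c1: "real (BPSP x) = (1/2) * (real (length x) - 1 - real_of_int (Max (H x ` Spin_space x)))"
    unfolding MH using L1 by (simp add: of_nat_diff)
  have c2: "real (BPSP x) = (1/2) * (real (length x) - 1 + real (dl_count x)
                                   - real_of_int (Max (H' x ` Spin_space x)))"
    unfolding MH' using L1 by (simp add: of_nat_diff)
  have c4: "argmax_on (H x) ?S = argmax_on (H' x) ?S"
    unfolding argmax_on_def using HH' by auto
  have c3: "\<phi> ` BPSP_star_ICC x = argmax_on (H x) ?S"
  proof
    show "\<phi> ` BPSP_star_ICC x \<subseteq> argmax_on (H x) ?S"
    proof
      fix w assume "w \<in> \<phi> ` BPSP_star_ICC x"
      then obtain z where z: "z \<in> ?I" "\<forall>z'\<in>?I. cost (icc_colouring x z) \<le> cost (icc_colouring x z')" "w = \<phi> z"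
        unfolding BPSP_star_ICC_def by auto
      have "H x w' \<le> H x w" if ww: "w' \<in> ?S" for w'
      proof -
        obtain z' where z': "z' \<in> ?I" "w' = \<phi> z'" using phiS[OF ww] by auto
        show ?thesis using z(2) z'(1) cH[of z] cH[of z'] z(3) z'(2) by force
      qed
      then show "w \<in> argmax_on (H x) ?S" unfolding argmax_on_def using phiI z(3) by auto
    qed
    show "argmax_on (H x) ?S \<subseteq> \<phi> ` BPSP_star_ICC x"
    proof
      fix w assume w: "w \<in> argmax_on (H x) ?S"
      then have wS: "w \<in> ?S" and wm: "\<forall>w'\<in>?S. H x w' \<le> H x w" unfolding argmax_on_def by auto
      obtain z where z: "z \<in> ?I" "w = \<phi> z" using phiS[OF wS] by auto
      have "cost (icc_colouring x z) \<le> cost (icc_colouring x z')" if "z' \<in> ?I" for z'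
        using wm phiI[of z'] cH[of z] cH[of z'] z(2) by force
      then have "z \<in> BPSP_star_ICC x" unfolding BPSP_star_ICC_def using z(1) by auto
      then show "w \<in> \<phi> ` BPSP_star_ICC x" using z(2) by auto
    qed
  qed
  show ?thesis using c1 c2 c3 c4 unfolding \<phi>_def n_def by blast
qed

end
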